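(* Let $U=(u_1,\dots,u_d)$ be an orthonormal basis of $\mathbb{R}^d$, $d\ge2$, and let $x\in\mathbb{R}^d$ be random with two distinct indices $i,j$ chosen uniformly at random, $x_i,x_j$ independent uniform random signs $\pm1$, and $x_k=0$ otherwise; let $y=Ux$. Then $U$ is not a local maximum of $\max_{\Psi\in\mathcal D}\mathbb{E}_y\|\Psi^\star y\|_\infty^2$: for $U_\varepsilon=(u_1,\dots,u_{d-1},(u_d+\varepsilon u_1)/\sqrt{1+\varepsilon^2})$ and every $\varepsilon>0$ one has $\mathbb{E}_y\|U_\varepsilon^\star y\|_\infty^2>\mathbb{E}_y\|U^\star y\|_\infty^2=1$.
   Context: $\mathcal D$ is the set of $d\times d$ matrices with unit-norm columns; $\|\cdot\|_\infty$ is the maximum absolute entry. *)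

theory Defs
  imports "HOL-Analysis.Analysis" "HOL-Probability.Probability"
begin

definition linf :: "real^'n \<Rightarrow> real" where
  "linf v = Max (range (\<lambda>k. \<bar>v $ k\<bar>))"

definition unitcol_mats :: "(real^'n^'n) set" where
  "unitcol_mats = {P. \<forall>k. norm (column k P) = 1}"

text \<open>Sample space: ordered pair of distinct indices (i,j), uniform (equivalently a
  uniform unordered pair), together with two independent uniform signs.\<close>
definition sample_space :: "('n::finite \<times> 'n \<times> real \<times> real) set" where
  "sample_space = {(i, j, s, t). i \<noteq> j \<and> s \<in> {-1, 1} \<and> t \<in> {-1, 1}}"

definition vec_of_sample :: "'n \<times> 'n \<times> real \<times> real \<Rightarrow> real^'n" where
  "vec_of_sample = (\<lambda>(i, j, s, t). \<chi> k. if k = i then s else if k = j then t else 0)"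

definition x_dist :: "(real^'n::finite) pmf" where
  "x_dist = map_pmf vec_of_sample (pmf_of_set sample_space)"

definition objective :: "real^'n::finite^'n \<Rightarrow> real^'n^'n \<Rightarrow> real" where
  "objective U P = measure_pmf.expectation x_dist
      (\<lambda>x. (linf (transpose P *v (U *v x)))\<^sup>2)"

text \<open>U_eps: last column (index b) replaced by (u_b + eps u_a)/sqrt(1+eps^2).\<close>
definition perturb :: "real^'n^'n \<Rightarrow> 'n \<Rightarrow> 'n \<Rightarrow> real \<Rightarrow> real^'n^'n" where
  "perturb U a b \<epsilon> = (\<chi> r c. if c = b then (U $ r $ b + \<epsilon> * U $ r $ a) / sqrt (1 + \<epsilon>\<^sup>2)
                               else U $ r $ c)"

end

theory Submission
  imports Defs
begin

lemma tmv_comp: "(transpose P *v z) $ c = (\<Sum>r\<in>UNIV. P$r$c * z$r)"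
  by (simp add: matrix_vector_mult_def transpose_def)

lemma linf_ge: "\<bar>v $ k\<bar> \<le> linf v"
  unfolding linf_def by (rule Max_ge) auto

lemma linf_eq1: "(\<And>k. \<bar>v $ k\<bar> \<le> 1) \<Longrightarrow> \<bar>v $ i\<bar> = 1 \<Longrightarrow> linf v = 1"
  unfolding linf_def
proof (rule Max_eqI)
  assume "\<And>k. \<bar>v $ k\<bar> \<le> 1" "\<bar>v $ i\<bar> = 1"
  then show "1 \<in> range (\<lambda>k. \<bar>v $ k\<bar>)" by (metis rangeI)
qed auto

lemma vos: "vec_of_sample (i,j,s,t) $ k = (if k = i then s else if k = j then t else 0)"
  by (simp add: vec_of_sample_def)

lemma sample_fin: "finite (sample_space :: ('n::finite \<times> 'n \<times> real \<times> real) set)"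
proof -
  have "sample_space \<subseteq> (UNIV::'n set) \<times> (UNIV::'n set) \<times> {-1,1::real} \<times> {-1,1::real}"
    by (auto simp: sample_space_def)
  then show ?thesis by (rule finite_subset) auto
qed

theorem mainTheorem8:
  fixes U :: "real^'n::finite^'n" and a b :: 'n
  assumes "CARD('n) \<ge> 2"
    and "orthogonal_matrix U"
    and "a \<noteq> b"
  shows "objective U U = 1 \<and>
         (\<forall>\<epsilon>>0. perturb U a b \<epsilon> \<in> unitcol_mats \<and>
                  objective U (perturb U a b \<epsilon>) > objective U U)"
proof -
  have TU: "transpose U *v (U *v x) = x" for x
    using assms(2) by (simp add: matrix_vector_mul_assoc orthogonal_matrix)
  have Pc: "(transpose (perturb U a b e) *v (U *v x)) $ c =
      (if c = b then (x$b + e * x$a)/sqrt(1+e^2) else x$c)" for x c e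
  proof -
    have xc: "x$k = (\<Sum>r\<in>UNIV. U$r$k * (U *v x)$r)" for k
      using TU[of x] tmv_comp[of U "U *v x" k] by simp
    show ?thesis
    proof (cases "c = b")
      case True
      have "(\<Sum>r\<in>UNIV. perturb U a b e $ r $ c * (U *v x) $ r)
          = (\<Sum>r\<in>UNIV. (U$r$b * (U *v x)$r + e * (U$r$a * (U *v x)$r)) / sqrt(1+e^2))"
        by (rule sum.cong) (auto simp: perturb_def True algebra_simps)
      also have "\<dots> = (x$b + e * x$a)/sqrt(1+e^2)"
        by (simp add: xc[of a] xc[of b] sum_divide_distrib[symmetric] sum.distrib sum_distrib_left)
      finally show ?thesis using True unfolding tmv_comp by simp
    next
      case False
      then show ?thesis unfolding tmv_comp by (simp add: perturb_def xc)
    qed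
  qed
  let ?S = "sample_space :: ('n \<times> 'n \<times> real \<times> real) set"
  have fin: "finite ?S" by (rule sample_fin)
  have w0: "(a,b,1,1) \<in> ?S" using assms(3) by (simp add: sample_space_def)
  have ne: "?S \<noteq> {}" using w0 by auto
  have cardpos: "card ?S > 0" using fin ne by (simp add: card_gt_0_iff)
  have obj: "objective U P = (\<Sum>w\<in>?S. (linf (transpose P *v (U *v vec_of_sample w)))\<^sup>2) / card ?S" for P
    unfolding objective_def x_dist_def by (simp add: integral_pmf_of_set[OF ne fin])
  have one: "linf (vec_of_sample w) = 1" if "w \<in> ?S" for w
  proof -
    obtain i j s t where w: "w = (i,j,s,t)" by (cases w) auto
    have "i \<noteq> j" "s \<in> {-1,1}" "t \<in> {-1,1}" using that w by (auto simp: sample_space_def)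
    then show ?thesis unfolding w
      by (intro linf_eq1[where i=i]) (auto simp: vos)
  qed
  have objU: "objective U U = 1"
    unfolding obj TU using one cardpos by simp
  have ge: "1 \<le> (linf (transpose (perturb U a b e) *v (U *v vec_of_sample w)))\<^sup>2"
    if "w \<in> ?S" for w e
  proof -
    obtain i j s t where w: "w = (i,j,s,t)" by (cases w) auto
    have ij: "i \<noteq> j" "s \<in> {-1,1}" "t \<in> {-1,1}" using that w by (auto simp: sample_space_def)
    let ?v = "transpose (perturb U a b e) *v (U *v vec_of_sample w)"
    have "1 \<le> linf ?v"
    proof (cases "i = b")
      case True
      then have "\<bar>?v $ j\<bar> = 1" unfolding Pc using ij by (auto simp: w vos)
      then show ?thesis using linf_ge[of ?v j] by simp
    next
      case False
      then have "\<bar>?v $ i\<bar> = 1" unfolding Pc using ij by (auto simp: w vos)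
      then show ?thesis using linf_ge[of ?v i] by simp
    qed
    then show ?thesis by (simp add: one_le_power)
  qed
  have gt: "1 < (linf (transpose (perturb U a b e) *v (U *v vec_of_sample (a,b,1,1))))\<^sup>2"
    if "e > 0" for e
  proof -
    let ?v = "transpose (perturb U a b e) *v (U *v vec_of_sample (a,b,1,1))"
    have v: "?v $ b = (1 + e) / sqrt (1 + e^2)" unfolding Pc using assms(3) by (simp add: vos)
    have "sqrt (1 + e^2) < sqrt ((1+e)^2)"
      by (rule real_sqrt_less_mono) (use that in \<open>simp add: power2_eq_square algebra_simps\<close>)
    also have "\<dots> = 1 + e" using that by simp
    finally have "1 < (1 + e) / sqrt (1 + e^2)"
      by (subst less_divide_eq_1_pos) (auto intro: add_pos_nonneg)
    then have "1 < linf ?v" using linf_ge[of ?v b] v that by simp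
    then show ?thesis by (simp add: one_less_power)
  qed
  have col: "perturb U a b e \<in> unitcol_mats" for e
  proof -
    have oc: "\<forall>i. norm(column i U) = 1" "\<forall>i j. i \<noteq> j \<longrightarrow> orthogonal (column i U) (column j U)"
      using assms(2) orthogonal_matrix_orthonormal_columns by blast+
    have "norm (column k (perturb U a b e)) = 1" for k
    proof (cases "k = b")
      case True
      have cb: "column k (perturb U a b e) = (1/sqrt(1+e^2)) *\<^sub>R (column b U + e *\<^sub>R column a U)"
        by (simp add: True column_def perturb_def vec_eq_iff divide_inverse algebra_simps)
      have "orthogonal (column b U) (e *\<^sub>R column a U)"
        using oc(2) assms(3) by (simp add: orthogonal_clauses)
      then have "norm (column b U + e *\<^sub>R column a U)^2 = 1 + e^2"
        using oc(1) by (simp add: norm_add_Pythagorean power_mult_distrib)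
      then have "norm (column b U + e *\<^sub>R column a U) = sqrt (1 + e^2)"
        by (metis norm_ge_zero real_sqrt_unique)
      moreover have "sqrt (1+e^2) > 0" by (simp add: add_pos_nonneg)
      ultimately show ?thesis unfolding cb by simp
    next
      case False
      then have "column k (perturb U a b e) = column k U"
        by (simp add: column_def perturb_def)
      then show ?thesis using oc(1) by simp
    qed
    then show ?thesis by (simp add: unitcol_mats_def)
  qed
  have "objective U (perturb U a b e) > 1" if "e > 0" for e
  proof -
    have "(\<Sum>w\<in>?S. 1) < (\<Sum>w\<in>?S. (linf (transpose (perturb U a b e) *v (U *v vec_of_sample w)))\<^sup>2)"
      by (rule sum_strict_mono_ex1[OF fin]) (use ge gt[OF that] w0 in blast)+
    then show ?thesis unfolding obj using cardpos by simp
  qed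
  then show ?thesis using objU col by simp
qed

end
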